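(* Let $\psi\in\mathbf{\Psi}_n$, and $x:=(x_1,\ldots,x_n)\in X^n$ with $|\!|\!|x|\!|\!|_{\psi}=1$. Then $$\partial|\!|\!|\cdot|\!|\!|_\psi(x) = \Big\{(\xi_1 x^*_1,\ldots,\xi_n x^*_n)\mid x^*_i\in\partial\|\cdot\|(x_i)\ (i=1,\ldots,n),\ (\xi_1,\ldots,\xi_n)\in\partial|\!|\!|\cdot|\!|\!|_{\psi}(\nu)\Big\},$$ where $\nu:=(\|x_1\|,\ldots,\|x_n\|)\in\mathbb{R}^n$ and, in $\partial|\!|\!|\cdot|\!|\!|_{\psi}(\nu)$, $|\!|\!|\cdot|\!|\!|_\psi$ denotes the corresponding norm on $\mathbb{R}^n$.
   Context: Let $(X,\|\cdot\|)$ be a normed vector space, $n\ge2$. $\Omega_n:=\{t\in\mathbb{R}^n\mid t_i\ge0,\ \sum_i t_i=1\}$, $\Omega_n^\circ:=\{t\in\Omega_n\mid t_i<1\ \forall i\}$. $\mathbf{\Psi}_n$ is the class of convex continuous $\psi:\Omega_n\to\mathbb{R}$ with (B1) $\psi(\mathbf{e}_i)=1$ for all standard unit vectors $\mathbf{e}_i$ and (B2) $\psi(t)\ge(1-t_i)\psi\big(\frac{t_1}{1-t_i},\ldots,\frac{t_{i-1}}{1-t_i},0,\frac{t_{i+1}}{1-t_i},\ldots,\frac{t_n}{1-t_i}\big)$ for all $t\in\Omega_n^\circ$, $i=1,\ldots,n$. For $\psi\in\mathbf{\Psi}_n$, $|\!|\!|x|\!|\!|_\psi:=\big(\sum_{i}\|x_i\|\big)\,\psi\big(\frac{\|x_1\|}{\sum_{i}\|x_i\|},\ldots,\frac{\|x_n\|}{\sum_{i}\|x_i\|}\big)$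 for $x\ne0$, $|\!|\!|0|\!|\!|_\psi:=0$ (on $\mathbb{R}^n$ take $X=\mathbb{R}$ with absolute value). $\partial$ denotes the convex subdifferential; $(X^n)^*$ is identified with $(X^* )^n$. *)

theory Defs
  imports "HOL-Analysis.Analysis"
begin

text \<open>The index set {1..n} is rendered as a finite type 'n; X^n as 'n \<Rightarrow> 'a.\<close>

definition Omega :: "('n::finite \<Rightarrow> real) set" where
  "Omega = {t. (\<forall>i. 0 \<le> t i) \<and> (\<Sum>i\<in>UNIV. t i) = 1}"

definition Omega_int :: "('n::finite \<Rightarrow> real) set" where
  "Omega_int = {t \<in> Omega. \<forall>i. t i < 1}"

definition unit_vec :: "'n \<Rightarrow> ('n \<Rightarrow> real)" where
  "unit_vec i = (\<lambda>j. if j = i then 1 else 0)"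

definition Psi_class :: "(('n::finite \<Rightarrow> real) \<Rightarrow> real) set" where
  "Psi_class = {\<psi>. (\<forall>s\<in>Omega. \<forall>t\<in>Omega. \<forall>u::real. 0 \<le> u \<and> u \<le> 1 \<longrightarrow>
         \<psi> (\<lambda>i. u * s i + (1 - u) * t i) \<le> u * \<psi> s + (1 - u) * \<psi> t) \<and> continuous_on Omega \<psi>
     \<and> (\<forall>i. \<psi> (unit_vec i) = 1)
     \<and> (\<forall>t\<in>Omega_int. \<forall>i. \<psi> t \<ge> (1 - t i) *
           \<psi> (\<lambda>j. if j = i then 0 else t j / (1 - t i)))}"

text \<open>The \<psi>-direct-sum norm on X^n (for X = real, norm = abs gives the norm on R^n).\<close>
definition psi_norm :: "(('n::finite \<Rightarrow> real) \<Rightarrow> real) \<Rightarrow> ('n \<Rightarrow> 'a::real_normed_vector) \<Rightarrow> real" where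
  "psi_norm \<psi> x = (if x = (\<lambda>_. 0) then 0 else
     (\<Sum>i\<in>UNIV. norm (x i)) * \<psi> (\<lambda>i. norm (x i) / (\<Sum>j\<in>UNIV. norm (x j))))"

text \<open>Subdifferential of a function on X^n; (X^n)* identified with (X*)^n:
  a tuple g of continuous linear functionals acts by y \<mapsto> \<Sum>i. g i (y i).\<close>
definition subdiff :: "(('n::finite \<Rightarrow> 'a::real_normed_vector) \<Rightarrow> real) \<Rightarrow> ('n \<Rightarrow> 'a) \<Rightarrow> ('n \<Rightarrow> 'a \<Rightarrow> real) set" where
  "subdiff F x = {g. (\<forall>i. bounded_linear (g i)) \<and>
      (\<forall>y. F x + (\<Sum>i\<in>UNIV. g i (y i - x i)) \<le> F y)}"

definition norm_subdiff :: "'a::real_normed_vector \<Rightarrow> ('a \<Rightarrow> real) set" where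
  "norm_subdiff x = {f. bounded_linear f \<and> (\<forall>y. norm x + f (y - x) \<le> norm y)}"

text \<open>Subdifferential of a function on R^n; (R^n)* identified with R^n via the standard pairing.\<close>
definition subdiff_Rn :: "(('n::finite \<Rightarrow> real) \<Rightarrow> real) \<Rightarrow> ('n \<Rightarrow> real) \<Rightarrow> ('n \<Rightarrow> real) set" where
  "subdiff_Rn F t = {\<xi>. \<forall>s. F t + (\<Sum>i\<in>UNIV. \<xi> i * (s i - t i)) \<le> F s}"

end

theory Submission
  imports Defs
begin


definition good_graph :: "'a::real_normed_vector \<Rightarrow> ('a \<times> real) set \<Rightarrow> bool" where
  "good_graph x H \<longleftrightarrow> (0, 0) \<in> H
     \<and> (\<forall>u a v b. (u, a) \<in> H \<longrightarrow> (v, b) \<in> H \<longrightarrow> (u + v, a + b) \<in> H)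
     \<and> (\<forall>c u a. (u, a) \<in> H \<longrightarrow> (c *\<^sub>R u, c * a) \<in> H)
     \<and> (\<forall>u a b. (u, a) \<in> H \<longrightarrow> (u, b) \<in> H \<longrightarrow> a = b)
     \<and> (x, norm x) \<in> H
     \<and> (\<forall>u a. (u, a) \<in> H \<longrightarrow> a \<le> norm u)"

lemma good_graph_init: "good_graph x (range (\<lambda>c. (c *\<^sub>R x, c * norm x)))"
  unfolding good_graph_def
proof (intro conjI allI impI)
  show "(0, 0) \<in> range (\<lambda>c. (c *\<^sub>R x, c * norm x))" by (rule image_eqI[where x=0]) auto
  show "(x, norm x) \<in> range (\<lambda>c. (c *\<^sub>R x, c * norm x))" by (rule image_eqI[where x=1]) auto
next
  fix u a v b assume "(u, a) \<in> range (\<lambda>c. (c *\<^sub>R x, c * norm x))" "(v, b) \<in> range (\<lambda>c. (c *\<^sub>R x, c * norm x))"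
  then obtain c d where "u = c *\<^sub>R x" "a = c * norm x" "v = d *\<^sub>R x" "b = d * norm x" by auto
  then show "(u + v, a + b) \<in> range (\<lambda>c. (c *\<^sub>R x, c * norm x))"
    by (intro image_eqI[where x="c+d"]) (auto simp: scaleR_add_left algebra_simps)
next
  fix c u a assume "(u, a) \<in> range (\<lambda>c. (c *\<^sub>R x, c * norm x))"
  then obtain d where "u = d *\<^sub>R x" "a = d * norm x" by auto
  then show "(c *\<^sub>R u, c * a) \<in> range (\<lambda>c. (c *\<^sub>R x, c * norm x))"
    by (intro image_eqI[where x="c*d"]) auto
next
  fix u a b assume "(u, a) \<in> range (\<lambda>c. (c *\<^sub>R x, c * norm x))" "(u, b) \<in> range (\<lambda>c. (c *\<^sub>R x, c * norm x))"
  then obtain c d where "u = c *\<^sub>R x" "a = c * norm x" "u = d *\<^sub>R x" "b = d * norm x" by blast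
  then show "a = b"
    by (cases "x = 0") (auto simp: scaleR_cancel_right)
next
  fix u a assume "(u, a) \<in> range (\<lambda>c. (c *\<^sub>R x, c * norm x))"
  then obtain c where "u = c *\<^sub>R x" "a = c * norm x" by auto
  then show "a \<le> norm u" by (auto intro: mult_right_mono)
qed

lemma gg_add: "good_graph x H \<Longrightarrow> (u, a) \<in> H \<Longrightarrow> (v, b) \<in> H \<Longrightarrow> (u + v, a + b) \<in> H"
  unfolding good_graph_def by blast
lemma gg_scale: "good_graph x H \<Longrightarrow> (u, a) \<in> H \<Longrightarrow> (c *\<^sub>R u, c * a) \<in> H"
  unfolding good_graph_def by blast
lemma gg_fun: "good_graph x H \<Longrightarrow> (u, a) \<in> H \<Longrightarrow> (u, b) \<in> H \<Longrightarrow> a = b"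
  unfolding good_graph_def by blast
lemma gg_le: "good_graph x H \<Longrightarrow> (u, a) \<in> H \<Longrightarrow> a \<le> norm u"
  unfolding good_graph_def by blast
lemma gg_0: "good_graph x H \<Longrightarrow> (0, 0) \<in> H"
  unfolding good_graph_def by blast
lemma gg_x: "good_graph x H \<Longrightarrow> (x, norm x) \<in> H"
  unfolding good_graph_def by blast

lemma good_graph_chain:
  assumes "C \<in> chains {H. good_graph x H}" "C \<noteq> {}"
  shows "good_graph x (\<Union>C)"
proof -
  have G: "\<And>H. H \<in> C \<Longrightarrow> good_graph x H" and ch: "\<And>H K. H \<in> C \<Longrightarrow> K \<in> C \<Longrightarrow> H \<subseteq> K \<or> K \<subseteq> H"
    using assms(1) unfolding chains_def chain_subset_def by auto
  obtain H0 where H0: "H0 \<in> C" using assms(2) by auto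
  have two: "\<exists>K\<in>C. p \<in> K \<and> q \<in> K" if pq: "p \<in> \<Union>C" "q \<in> \<Union>C" for p q
  proof -
    obtain H where "H \<in> C" "p \<in> H" using pq(1) by blast
    moreover obtain K where "K \<in> C" "q \<in> K" using pq(2) by blast
    ultimately show ?thesis using ch[of H K] by (meson subsetD)
  qed
  show ?thesis
    unfolding good_graph_def
  proof (intro conjI allI impI)
    show "(0, 0) \<in> \<Union>C" using gg_0 gg_x G[OF H0] H0 by blast
    show "(x, norm x) \<in> \<Union>C" using gg_0 gg_x G[OF H0] H0 by blast
  next
    fix u a v b assume "(u, a) \<in> \<Union>C" "(v, b) \<in> \<Union>C"
    then obtain K where "K \<in> C" "(u,a) \<in> K" "(v,b) \<in> K" using two by blast
    then show "(u + v, a + b) \<in> \<Union>C" using G[of K] gg_add by blast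
  next
    fix c u a assume "(u, a) \<in> \<Union>C"
    then obtain K where "K \<in> C" "(u,a) \<in> K" by blast
    then show "(c *\<^sub>R u, c * a) \<in> \<Union>C" using G[of K] gg_scale by blast
  next
    fix u a b assume "(u, a) \<in> \<Union>C" "(u, b) \<in> \<Union>C"
    then obtain K where "K \<in> C" "(u,a) \<in> K" "(u,b) \<in> K" using two by blast
    then show "a = b" using G[of K] gg_fun by blast
  next
    fix u a assume "(u, a) \<in> \<Union>C"
    then obtain K where "K \<in> C" "(u,a) \<in> K" by blast
    then show "a \<le> norm u" using G[of K] gg_le by blast
  qed
qed

lemma good_graph_extend:
  assumes M: "good_graph x M" and z: "z \<notin> fst ` M"
  shows "\<exists>M'. good_graph x M' \<and> M \<subseteq> M' \<and> M' \<noteq> M"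
proof -
  define S where "S = {b - norm (u - z) | u b. (u, b) \<in> M}"
  define c where "c = Sup S"
  have key: "b - norm (u - z) \<le> norm (v + z) - a" if "(u, b) \<in> M" "(v, a) \<in> M" for u b v a
  proof -
    have "(u + v, b + a) \<in> M" using gg_add[OF M that] .
    then have "b + a \<le> norm (u + v)" using gg_le[OF M] by blast
    also have "norm (u + v) = norm ((u - z) + (v + z))" by simp
    also have "\<dots> \<le> norm (u - z) + norm (v + z)" by (rule norm_triangle_ineq)
    finally show ?thesis by simp
  qed
  have Sne: "S \<noteq> {}" using gg_0[OF M] unfolding S_def by blast
  have Sbdd: "bdd_above S" unfolding S_def bdd_above_def
    using key[OF _ gg_0[OF M]] by auto
  have c_up: "b - norm (u - z) \<le> c" if "(u, b) \<in> M" for u b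
    unfolding c_def using Sbdd that by (intro cSup_upper) (auto simp: S_def)
  have c_low: "c \<le> norm (v + z) - a" if "(v, a) \<in> M" for v a
    unfolding c_def using Sne that key by (intro cSup_least) (auto simp: S_def)
  define M' where "M' = {(v + t *\<^sub>R z, a + t * c) | v a t. (v, a) \<in> M}"
  have bound: "a + t * c \<le> norm (v + t *\<^sub>R z)" if va: "(v, a) \<in> M" for v a t
  proof (cases t "0::real" rule: linorder_cases)
    case less
    define s where "s = - t"
    have s: "s > 0" using less s_def by simp
    have "(inverse s *\<^sub>R v, inverse s * a) \<in> M" using gg_scale[OF M va] .
    then have "inverse s * a - norm (inverse s *\<^sub>R v - z) \<le> c" by (rule c_up)
    then have "s * (inverse s * a - norm (inverse s *\<^sub>R v - z)) \<le> s * c"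
      using s by (intro mult_left_mono) auto
    moreover have "s * norm (inverse s *\<^sub>R v - z) = norm (v - s *\<^sub>R z)"
    proof -
      have "v - s *\<^sub>R z = s *\<^sub>R (inverse s *\<^sub>R v - z)" using s by (simp add: algebra_simps)
      then show ?thesis using s by simp
    qed
    ultimately have "a - norm (v - s *\<^sub>R z) \<le> s * c" using s by (simp add: algebra_simps)
    then show ?thesis by (simp add: s_def)
  next
    case equal
    then show ?thesis using gg_le[OF M va] by simp
  next
    case greater
    have "(inverse t *\<^sub>R v, inverse t * a) \<in> M" using gg_scale[OF M va] .
    then have "c \<le> norm (inverse t *\<^sub>R v + z) - inverse t * a" by (rule c_low)
    then have "t * c \<le> t * (norm (inverse t *\<^sub>R v + z) - inverse t * a)"
      using greater by (intro mult_left_mono) auto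
    moreover have "t * norm (inverse t *\<^sub>R v + z) = norm (v + t *\<^sub>R z)"
    proof -
      have "v + t *\<^sub>R z = t *\<^sub>R (inverse t *\<^sub>R v + z)" using greater by (simp add: algebra_simps)
      then show ?thesis using greater by simp
    qed
    ultimately show ?thesis using greater by (simp add: algebra_simps)
  qed
  have "good_graph x M'"
    unfolding good_graph_def
  proof (intro conjI allI impI)
    show "(0, 0) \<in> M'" unfolding M'_def using gg_0[OF M]
      by (intro CollectI exI[of _ 0] exI[of _ "0::real"]) auto
    show "(x, norm x) \<in> M'" unfolding M'_def using gg_x[OF M]
      by (intro CollectI exI[of _ x] exI[of _ "norm x"] exI[of _ "0::real"]) auto
  next
    fix u a v b assume "(u, a) \<in> M'" "(v, b) \<in> M'"
    then obtain u1 a1 t1 u2 a2 t2 where "u = u1 + t1 *\<^sub>R z" "a = a1 + t1 * c" "(u1, a1) \<in> M"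
      "v = u2 + t2 *\<^sub>R z" "b = a2 + t2 * c" "(u2, a2) \<in> M" unfolding M'_def by blast
    then show "(u + v, a + b) \<in> M'" unfolding M'_def using gg_add[OF M, of u1 a1 u2 a2]
      by (intro CollectI exI[of _ "u1 + u2"] exI[of _ "a1 + a2"] exI[of _ "t1 + t2"])
        (auto simp: algebra_simps)
  next
    fix d u a assume "(u, a) \<in> M'"
    then obtain u1 a1 t1 where "u = u1 + t1 *\<^sub>R z" "a = a1 + t1 * c" "(u1, a1) \<in> M"
      unfolding M'_def by blast
    then show "(d *\<^sub>R u, d * a) \<in> M'" unfolding M'_def using gg_scale[OF M, of u1 a1 d]
      by (intro CollectI exI[of _ "d *\<^sub>R u1"] exI[of _ "d * a1"] exI[of _ "d * t1"])
        (auto simp: algebra_simps)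
  next
    fix u a b assume "(u, a) \<in> M'" "(u, b) \<in> M'"
    then obtain u1 a1 t1 u2 a2 t2 where e: "u = u1 + t1 *\<^sub>R z" "a = a1 + t1 * c" and m1: "(u1, a1) \<in> M"
      and f: "u = u2 + t2 *\<^sub>R z" "b = a2 + t2 * c" and m2: "(u2, a2) \<in> M" unfolding M'_def by blast
    have "t1 = t2"
    proof (rule ccontr)
      assume ne: "t1 \<noteq> t2"
      have "(u2 + (-1) *\<^sub>R u1, a2 + (-1) * a1) \<in> M"
        using gg_add[OF M m2 gg_scale[OF M m1]] .
      then have "(inverse (t1 - t2) *\<^sub>R (u2 - u1), inverse (t1 - t2) * (a2 - a1)) \<in> M"
        using gg_scale[OF M] by fastforce
      moreover have "inverse (t1 - t2) *\<^sub>R (u2 - u1) = z"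
      proof -
        have "u2 - u1 = (t1 - t2) *\<^sub>R z" using e f by (simp add: algebra_simps)
        then show ?thesis using ne by simp
      qed
      ultimately have "z \<in> fst ` M" by force
      then show False using z by blast
    qed
    then have "u1 = u2" using e f by simp
    then have "a1 = a2" using gg_fun[OF M m1] m2 by blast
    then show "a = b" using e f \<open>t1 = t2\<close> by simp
  next
    fix u a assume "(u, a) \<in> M'"
    then obtain u1 a1 t1 where "u = u1 + t1 *\<^sub>R z" "a = a1 + t1 * c" "(u1, a1) \<in> M"
      unfolding M'_def by blast
    then show "a \<le> norm u" using bound by blast
  qed
  moreover have "M \<subseteq> M'"
  proof
    fix p assume pM: "p \<in> M"
    obtain u a where p: "p = (u, a)" by (cases p)
    have "(u + 0 *\<^sub>R z, a + 0 * c) \<in> M'" unfolding M'_def using pM p by blast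
    then show "p \<in> M'" using p by simp
  qed
  moreover have "(z, c) \<in> M'" unfolding M'_def using gg_0[OF M]
    by (intro CollectI exI[of _ 0] exI[of _ "0::real"] exI[of _ "1::real"]) auto
  then have "M' \<noteq> M" using z by force
  ultimately show ?thesis by blast
qed

lemma hahn_banach_norm:
  fixes x :: "'a::real_normed_vector"
  shows "\<exists>f. bounded_linear f \<and> f x = norm x \<and> (\<forall>y. f y \<le> norm y)"
proof -
  have "\<forall>C\<in>chains {H. good_graph x H}. \<exists>U\<in>{H. good_graph x H}. \<forall>X\<in>C. X \<subseteq> U"
  proof
    fix C assume C: "C \<in> chains {H. good_graph x H}"
    show "\<exists>U\<in>{H. good_graph x H}. \<forall>X\<in>C. X \<subseteq> U"
    proof (cases "C = {}")
      case True then show ?thesis using good_graph_init by blast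
    next
      case False then show ?thesis using good_graph_chain[OF C] by blast
    qed
  qed
  from Zorn_Lemma2[OF this] obtain M where M: "good_graph x M"
    and max: "\<And>X. good_graph x X \<Longrightarrow> M \<subseteq> X \<Longrightarrow> X = M" by blast
  have all: "\<exists>a. (v, a) \<in> M" for v
  proof (rule ccontr)
    assume "\<nexists>a. (v, a) \<in> M"
    then have "v \<notin> fst ` M" by force
    from good_graph_extend[OF M this] max show False by blast
  qed
  define f where "f v = (THE a. (v, a) \<in> M)" for v
  have fM: "(v, f v) \<in> M" for v
  proof -
    obtain a where a: "(v, a) \<in> M" using all by blast
    have "f v = a" unfolding f_def using a gg_fun[OF M a] by blast
    then show ?thesis using a by simp
  qed
  have feq: "f v = a" if "(v, a) \<in> M" for v a using gg_fun[OF M fM that] .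
  have fadd: "f (u + v) = f u + f v" for u v using feq[OF gg_add[OF M fM fM]] .
  have fscale: "f (r *\<^sub>R v) = r *\<^sub>R f v" for r v using feq[OF gg_scale[OF M fM]] by simp
  have fle: "f y \<le> norm y" for y using gg_le[OF M fM] .
  have "bounded_linear f"
  proof (rule bounded_linear_intro[where K=1])
    fix y
    have "- f y = f (-y)" using fscale[of "-1" y] by simp
    also have "\<dots> \<le> norm y" using fle[of "-y"] by simp
    finally show "norm (f y) \<le> norm y * 1" using fle[of y] by simp
  qed (use fadd fscale in auto)
  moreover have "f x = norm x" using feq[OF gg_x[OF M]] .
  ultimately show ?thesis using fle by blast
qed



lemma psi_norm_abs:
  fixes y :: "'n::finite \<Rightarrow> 'a::real_normed_vector"
  shows "psi_norm \<psi> y = psi_norm \<psi> (\<lambda>i. norm (y i))"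
proof -
  have "((\<lambda>i. norm (y i)) = (\<lambda>_. 0)) \<longleftrightarrow> y = (\<lambda>_. 0)" by (auto simp: fun_eq_iff)
  then show ?thesis unfolding psi_norm_def by simp
qed

lemma psi_norm_scale:
  fixes y :: "'n::finite \<Rightarrow> 'a::real_normed_vector"
  assumes "c \<ge> 0"
  shows "psi_norm \<psi> (\<lambda>i. c *\<^sub>R y i) = c * psi_norm \<psi> y"
proof (cases "c = 0 \<or> y = (\<lambda>_. 0)")
  case True
  then show ?thesis unfolding psi_norm_def by (auto simp: fun_eq_iff)
next
  case False
  then have c: "c > 0" and y: "y \<noteq> (\<lambda>_. 0)" using assms by auto
  then have ne: "(\<lambda>i. c *\<^sub>R y i) \<noteq> (\<lambda>_. 0)" by (auto simp: fun_eq_iff)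
  have s: "(\<Sum>i\<in>UNIV. norm (c *\<^sub>R y i)) = c * (\<Sum>i\<in>UNIV. norm (y i))"
    using c by (simp add: sum_distrib_left)
  have r: "(\<lambda>i. norm (c *\<^sub>R y i) / (c * (\<Sum>j\<in>UNIV. norm (y j)))) = (\<lambda>i. norm (y i) / (\<Sum>j\<in>UNIV. norm (y j)))"
    using c by (auto simp: fun_eq_iff)
  show ?thesis unfolding psi_norm_def using ne y s r by (simp add: s)
qed

lemma norm_subdiffI:
  "bounded_linear f \<Longrightarrow> f x = norm x \<Longrightarrow> (\<forall>y. f y \<le> norm y) \<Longrightarrow> f \<in> norm_subdiff x"
  unfolding norm_subdiff_def by (auto simp: linear_simps)

lemma norm_subdiffD:
  assumes "f \<in> norm_subdiff x"
  shows "bounded_linear f" "f x = norm x" "f y \<le> norm y"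
proof -
  show bl: "bounded_linear f" using assms unfolding norm_subdiff_def by blast
  have H: "norm x + f (z - x) \<le> norm z" for z using assms unfolding norm_subdiff_def by blast
  have "norm x + f (0 - x) \<le> 0" using H[of 0] by simp
  moreover have "2 *\<^sub>R x - x = x" by (simp add: scaleR_2)
  then have "norm x + f x \<le> 2 * norm x" using H[of "2 *\<^sub>R x"] by simp
  ultimately show fx: "f x = norm x" using linear_neg[OF bounded_linear.linear[OF bl], of x]
    by (simp add: algebra_simps)
  have "norm x + f ((x + y) - x) \<le> norm (x + y)" using H[of "x + y"] .
  also have "\<dots> \<le> norm x + norm y" by (rule norm_triangle_ineq)
  finally show "f y \<le> norm y" by simp
qed

lemma onorm_approx:
  fixes f :: "'a::real_normed_vector \<Rightarrow> real"
    and u :: 'a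
  assumes bl: "bounded_linear f" and u: "u \<noteq> 0" and e: "e > 0"
  shows "\<exists>v. norm v = 1 \<and> onorm f - e \<le> f v"
proof -
  have bdd: "bdd_above (range (\<lambda>x. norm (f x) / norm x))"
    by (rule bdd_aboveI2[where M="onorm f"]) (rule le_onorm[OF bl])
  have "onorm f - e < (SUP x. norm (f x) / norm x)" using e unfolding onorm_def by simp
  then obtain w where w: "onorm f - e < norm (f w) / norm w"
    using less_cSUP_iff[OF _ bdd] by auto
  have "\<exists>v0. norm v0 = 1 \<and> onorm f - e < \<bar>f v0\<bar>"
  proof (cases "w = 0")
    case True
    then have "onorm f - e < 0" using w by simp
    moreover have "norm (u /\<^sub>R norm u) = 1" using u by simp
    ultimately show ?thesis by (intro exI[of _ "u /\<^sub>R norm u"]) auto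
  next
    case False
    have "f (w /\<^sub>R norm w) = f w / norm w" using linear_scale[OF bounded_linear.linear[OF bl]] by (simp add: divide_inverse_commute)
    then have "\<bar>f (w /\<^sub>R norm w)\<bar> = norm (f w) / norm w" by simp
    then show ?thesis using False w by (intro exI[of _ "w /\<^sub>R norm w"]) auto
  qed
  then obtain v0 where v0: "norm v0 = 1" "onorm f - e < \<bar>f v0\<bar>" by blast
  show ?thesis
  proof (cases "f v0 \<ge> 0")
    case True then show ?thesis using v0 by (intro exI[of _ v0]) auto
  next
    case False then show ?thesis using v0 linear_neg[OF bounded_linear.linear[OF bl], of v0] by (intro exI[of _ "- v0"]) auto
  qed
qed

lemma supset_part:
  fixes \<psi> :: "('n::finite \<Rightarrow> real) \<Rightarrow> real"
    and x :: "'n \<Rightarrow> 'a::real_normed_vector"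
  assumes xs: "\<forall>i. xs i \<in> norm_subdiff (x i)"
    and xi: "\<xi> \<in> subdiff_Rn (psi_norm \<psi>) (\<lambda>i. norm (x i))"
  shows "(\<lambda>i v. \<xi> i * xs i v) \<in> subdiff (psi_norm \<psi>) x"
  unfolding subdiff_def
proof (intro CollectI conjI allI)
  fix i
  show "bounded_linear (\<lambda>v. \<xi> i * xs i v)"
    using bounded_linear_compose[OF bounded_linear_mult_right norm_subdiffD(1)[OF xs[rule_format, of i]]] by simp
next
  fix y :: "'n \<Rightarrow> 'a"
  define s where "s i = (if \<xi> i \<ge> 0 then norm (y i) else - norm (y i))" for i
  have per: "\<xi> i * xs i (y i - x i) \<le> \<xi> i * (s i - norm (x i))" for i
  proof -
    have bl: "bounded_linear (xs i)" and fx: "xs i (x i) = norm (x i)"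
      and le: "\<And>z. xs i z \<le> norm z" using norm_subdiffD[OF xs[rule_format, of i]] by auto
    have d: "xs i (y i - x i) = xs i (y i) - norm (x i)" using linear_diff[OF bounded_linear.linear[OF bl]] fx by simp
    show ?thesis
    proof (cases "\<xi> i \<ge> 0")
      case True
      then show ?thesis unfolding d s_def using le[of "y i"] by (simp add: mult_left_mono)
    next
      case False
      have "- xs i (y i) \<le> norm (y i)" using le[of "- y i"] linear_neg[OF bounded_linear.linear[OF bl], of "y i"] by simp
      then have "- norm (y i) - norm (x i) \<le> xs i (y i) - norm (x i)" by simp
      then show ?thesis unfolding d s_def using False by (simp add: mult_left_mono_neg)
    qed
  qed
  have "(\<Sum>i\<in>UNIV. \<xi> i * xs i (y i - x i)) \<le> (\<Sum>i\<in>UNIV. \<xi> i * (s i - norm (x i)))"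
    by (rule sum_mono) (rule per)
  also have "psi_norm \<psi> (\<lambda>i. norm (x i)) + \<dots> \<le> psi_norm \<psi> s"
    using xi unfolding subdiff_Rn_def by blast
  finally have "psi_norm \<psi> (\<lambda>i. norm (x i)) + (\<Sum>i\<in>UNIV. \<xi> i * xs i (y i - x i)) \<le> psi_norm \<psi> s"
    by simp
  moreover have "psi_norm \<psi> s = psi_norm \<psi> y"
  proof -
    have "(\<lambda>i. norm (s i)) = (\<lambda>i. norm (y i))" by (auto simp: s_def fun_eq_iff)
    then show ?thesis using psi_norm_abs[of \<psi> s] psi_norm_abs[of \<psi> y] by simp
  qed
  ultimately show "psi_norm \<psi> x + (\<Sum>i\<in>UNIV. \<xi> i * xs i (y i - x i)) \<le> psi_norm \<psi> y"
    using psi_norm_abs[of \<psi> x] by simp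
qed

lemma subset_part:
  fixes \<psi> :: "('n::finite \<Rightarrow> real) \<Rightarrow> real"
    and x :: "'n \<Rightarrow> 'a::real_normed_vector"
  assumes F1: "psi_norm \<psi> x = 1" and g: "g \<in> subdiff (psi_norm \<psi>) x"
  shows "\<exists>xs \<xi>. g = (\<lambda>i v. \<xi> i * xs i v) \<and> (\<forall>i. xs i \<in> norm_subdiff (x i))
            \<and> \<xi> \<in> subdiff_Rn (psi_norm \<psi>) (\<lambda>i. norm (x i))"
proof -
  let ?F = "psi_norm \<psi> :: ('n \<Rightarrow> 'a) \<Rightarrow> real"
  define G where "G y = (\<Sum>i\<in>UNIV. g i (y i))" for y
  have bl: "\<And>i. bounded_linear (g i)" using g unfolding subdiff_def by blast
  have lin: "\<And>i. linear (g i)" using bl bounded_linear.linear by blast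
  have sub: "?F x + (\<Sum>i\<in>UNIV. g i (y i - x i)) \<le> ?F y" for y using g unfolding subdiff_def by blast
  have sub2: "1 + G y - G x \<le> ?F y" for y
  proof -
    have "(\<Sum>i\<in>UNIV. g i (y i - x i)) = G y - G x"
      unfolding G_def by (simp add: linear_diff[OF lin] sum_subtractf)
    then show ?thesis using sub[of y] F1 by simp
  qed
  have Gs: "G (\<lambda>i. c *\<^sub>R x i) = c * G x" for c
    unfolding G_def by (simp add: linear_scale[OF lin] sum_distrib_left)
  have "1 + 0 * G x - G x \<le> 0" using sub2[of "\<lambda>i. 0 *\<^sub>R x i"] Gs[of 0] psi_norm_scale[of 0 \<psi> x] by simp
  moreover have "1 + 2 * G x - G x \<le> 2" using sub2[of "\<lambda>i. 2 *\<^sub>R x i"] Gs[of 2] psi_norm_scale[of 2 \<psi> x] F1 by simp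
  ultimately have Gx: "G x = 1" by simp
  have Gle: "G y \<le> ?F y" for y using sub2[of y] Gx by simp
  have x0: "x \<noteq> (\<lambda>_. 0)" using F1 unfolding psi_norm_def by auto
  then obtain k where xk: "x k \<noteq> 0" by auto
  have step2: "g j v * norm (x j) \<le> g j (x j) * norm v" if xj: "x j \<noteq> 0" for j v
  proof (cases "v = 0")
    case True then show ?thesis using linear_0[OF lin] by simp
  next
    case False
    define w where "w = (norm (x j) / norm v) *\<^sub>R v"
    have nw: "norm w = norm (x j)" using False unfolding w_def by simp
    define y where "y = x(j := w)"
    have "(\<lambda>i. norm (y i)) = (\<lambda>i. norm (x i))" using nw by (auto simp: y_def fun_eq_iff)
    then have "?F y = ?F x" using psi_norm_abs[of \<psi> y] psi_norm_abs[of \<psi> x] by simp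
    then have "G y \<le> G x" using Gle[of y] Gx F1 by simp
    moreover have "G y - G x = g j w - g j (x j)"
    proof -
      have "G y - G x = (\<Sum>i\<in>UNIV. g i (y i) - g i (x i))" unfolding G_def by (simp add: sum_subtractf)
      also have "\<dots> = (\<Sum>i\<in>UNIV. if i = j then g j w - g j (x j) else 0)"
        by (rule sum.cong) (auto simp: y_def)
      finally show ?thesis by simp
    qed
    ultimately have "g j w \<le> g j (x j)" by simp
    moreover have "g j w = (norm (x j) / norm v) * g j v" unfolding w_def using linear_scale[OF lin] by simp
    ultimately have "norm (x j) * g j v / norm v \<le> g j (x j)" by simp
    moreover have "norm v > 0" using False by simp
    ultimately show ?thesis by (simp add: pos_divide_le_eq mult.commute)
  qed
  define \<xi> where "\<xi> j = onorm (g j)" for j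
  have xi0: "\<xi> j \<ge> 0" for j unfolding \<xi>_def by (rule onorm_pos_le[OF bl])
  have xib: "\<bar>g j v\<bar> \<le> \<xi> j * norm v" for j v unfolding \<xi>_def using onorm[OF bl] by (metis real_norm_def)
  have gx: "g j (x j) = \<xi> j * norm (x j)" for j
  proof (cases "x j = 0")
    case True then show ?thesis using linear_0[OF lin] by simp
  next
    case False
    define c where "c = g j (x j) / norm (x j)"
    have s2: "g j v \<le> c * norm v" for v using step2[OF False, of v] False
      unfolding c_def by (simp add: field_simps)
    have "g j (- x j) \<le> c * norm (x j)" using s2[of "- x j"] by simp
    then have "- g j (x j) \<le> g j (x j)" using linear_neg[OF lin] False unfolding c_def by simp
    then have c0: "c \<ge> 0" unfolding c_def by simp
    have "\<bar>g j v\<bar> \<le> c * norm v" for v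
      using s2[of v] s2[of "- v"] linear_neg[OF lin, of j v] by simp
    then have "\<xi> j \<le> c" unfolding \<xi>_def using c0 by (intro onorm_bound) (auto simp: real_norm_def)
    then have "\<xi> j * norm (x j) \<le> c * norm (x j)" by (simp add: mult_right_mono)
    also have "c * norm (x j) = g j (x j)" unfolding c_def using False by simp
    finally show ?thesis using xib[of j "x j"] by simp
  qed
  obtain h where h: "\<And>j. bounded_linear (h j) \<and> h j (x j) = norm (x j) \<and> (\<forall>y. h j y \<le> norm y)"
  proof -
    have "\<forall>j. \<exists>f. bounded_linear f \<and> f (x j) = norm (x j) \<and> (\<forall>y. f y \<le> norm y)"
      using hahn_banach_norm by blast
    then show ?thesis using that by metis
  qed
  define xs where "xs j = (if \<xi> j = 0 then h j else (\<lambda>v. g j v / \<xi> j))" for j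
  have xs_ok: "xs j \<in> norm_subdiff (x j)" for j
  proof (cases "\<xi> j = 0")
    case True then show ?thesis unfolding xs_def using h[of j] by (simp add: norm_subdiffI)
  next
    case False
    then have p: "\<xi> j > 0" using xi0[of j] by simp
    have "bounded_linear (\<lambda>v. g j v / \<xi> j)"
      using bounded_linear_compose[OF bounded_linear_divide bl] by simp
    moreover have "g j (x j) / \<xi> j = norm (x j)" using gx[of j] p by simp
    moreover have "g j y / \<xi> j \<le> norm y" for y
      using xib[of j y] p by (simp add: divide_le_eq mult.commute)
    ultimately show ?thesis unfolding xs_def using False by (simp add: norm_subdiffI)
  qed
  have geq: "g = (\<lambda>i v. \<xi> i * xs i v)"
  proof (intro ext)
    fix i v
    show "g i v = \<xi> i * xs i v"
    proof (cases "\<xi> i = 0")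
      case True then show ?thesis using xib[of i v] by simp
    next
      case False then show ?thesis unfolding xs_def by simp
    qed
  qed
  have main: "(\<Sum>i\<in>UNIV. \<xi> i * t i) \<le> psi_norm \<psi> t" if t0: "\<forall>i. t i \<ge> 0" for t
  proof (rule ccontr)
    assume "\<not> ?thesis"
    then have gap: "(\<Sum>i\<in>UNIV. \<xi> i * t i) - psi_norm \<psi> t > 0" by simp
    define T where "T = (\<Sum>i\<in>UNIV. t i)"
    have T0: "T \<ge> 0" unfolding T_def using t0 by (simp add: sum_nonneg)
    define e where "e = ((\<Sum>i\<in>UNIV. \<xi> i * t i) - psi_norm \<psi> t) / (T + 1)"
    have e0: "e > 0" unfolding e_def using gap T0 by simp
    have "\<forall>j. \<exists>v. norm v = 1 \<and> \<xi> j - e \<le> g j v"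
      unfolding \<xi>_def using onorm_approx[OF bl xk e0] by blast
    then obtain v where v: "\<And>j. norm (v j) = 1" "\<And>j. \<xi> j - e \<le> g j (v j)" by metis
    define y where "y i = t i *\<^sub>R v i" for i
    have "(\<lambda>i. norm (y i)) = t" using v(1) t0 by (auto simp: y_def fun_eq_iff)
    then have Fy: "?F y = psi_norm \<psi> t" using psi_norm_abs[of \<psi> y] by simp
    have "(\<Sum>i\<in>UNIV. t i * (\<xi> i - e)) \<le> (\<Sum>i\<in>UNIV. t i * g i (v i))"
      by (rule sum_mono) (use t0 v(2) in \<open>simp add: mult_left_mono\<close>)
    also have "\<dots> = G y" unfolding G_def y_def by (simp add: linear_scale[OF lin])
    also have "\<dots> \<le> psi_norm \<psi> t" using Gle[of y] Fy by simp
    finally have "(\<Sum>i\<in>UNIV. \<xi> i * t i) - e * T \<le> psi_norm \<psi> t"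
      unfolding T_def by (simp add: algebra_simps sum_subtractf sum_distrib_left)
    moreover have "e * T < e * (T + 1)" using e0 by simp
    moreover have "e * (T + 1) = (\<Sum>i\<in>UNIV. \<xi> i * t i) - psi_norm \<psi> t"
      unfolding e_def using T0 by simp
    ultimately show False by simp
  qed
  have "\<xi> \<in> subdiff_Rn (psi_norm \<psi>) (\<lambda>i. norm (x i))"
    unfolding subdiff_Rn_def
  proof (intro CollectI allI)
    fix s :: "'n \<Rightarrow> real"
    have Fn: "psi_norm \<psi> (\<lambda>i. norm (x i)) = 1" using psi_norm_abs[of \<psi> x] F1 by simp
    have sx: "(\<Sum>i\<in>UNIV. \<xi> i * norm (x i)) = 1" using Gx unfolding G_def by (simp add: gx)
    have "(\<Sum>i\<in>UNIV. \<xi> i * s i) \<le> (\<Sum>i\<in>UNIV. \<xi> i * \<bar>s i\<bar>)"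
      by (rule sum_mono) (use xi0 in \<open>simp add: mult_left_mono\<close>)
    also have "\<dots> \<le> psi_norm \<psi> (\<lambda>i. \<bar>s i\<bar>)" by (rule main) simp
    also have "\<dots> = psi_norm \<psi> s" using psi_norm_abs[of \<psi> s] by simp
    finally have "(\<Sum>i\<in>UNIV. \<xi> i * s i) \<le> psi_norm \<psi> s" .
    then show "psi_norm \<psi> (\<lambda>i. norm (x i)) + (\<Sum>i\<in>UNIV. \<xi> i * (s i - norm (x i))) \<le> psi_norm \<psi> s"
      using Fn sx by (simp add: right_diff_distrib sum_subtractf)
  qed
  then show ?thesis using geq xs_ok by blast
qed


theorem theorem4p3:
  fixes \<psi> :: "('n::finite \<Rightarrow> real) \<Rightarrow> real"
    and x :: "'n \<Rightarrow> 'a::real_normed_vector"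
  assumes "CARD('n) \<ge> 2"
    and "\<psi> \<in> Psi_class"
    and "psi_norm \<psi> x = 1"
  shows "subdiff (psi_norm \<psi>) x =
    {(\<lambda>i v. \<xi> i * xs i v) | xs \<xi>.
       (\<forall>i. xs i \<in> norm_subdiff (x i)) \<and>
       \<xi> \<in> subdiff_Rn (psi_norm \<psi>) (\<lambda>i. norm (x i))}"
proof
  show "subdiff (psi_norm \<psi>) x \<subseteq> {(\<lambda>i v. \<xi> i * xs i v) | xs \<xi>.
       (\<forall>i. xs i \<in> norm_subdiff (x i)) \<and>
       \<xi> \<in> subdiff_Rn (psi_norm \<psi>) (\<lambda>i. norm (x i))}"
    using subset_part[OF assms(3)] by blast
next
  show "{(\<lambda>i v. \<xi> i * xs i v) | xs \<xi>.
       (\<forall>i. xs i \<in> norm_subdiff (x i)) \<and>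
       \<xi> \<in> subdiff_Rn (psi_norm \<psi>) (\<lambda>i. norm (x i))} \<subseteq> subdiff (psi_norm \<psi>) x"
    using supset_part by blast
qed

end
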